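(* Let $\phi_1,\dots,\phi_n:\mathbb{R}^d\to\mathbb{R}$ be differentiable and let $P(w)=\frac1n\sum_{i=1}^n\phi_i(w)$. Suppose $P$ is $H$-strongly convex and $(1/\gamma)$-smooth, and let $w^*$ be a minimizer of $P$. Run the stratified-sampling minibatch SGD algorithm described in the context with step sizes $\eta_t=1/(a+Ht)$, where $a\ge 1/\gamma-H$. Then for every $T\ge1$, $$\inf_{t\in[T]}\mathbb{E}P(w_{t+1})-P(w^* )\le\frac1T\sum_{t=1}^T\mathbb{E}P(w_{t+1})-P(w^* )\le\frac1T\Big[\frac a2\|w^*\|^2+\mathbb{E}\sum_{t=1}^T\frac{V_t}{a+Ht}\Big],$$ where $V_t$ is the variance of the stochastic gradient $g_t$ defined in the context.
   Context: $\|\cdot\|$ denotes the Euclidean norm and $[T]=\{1,\dots,T\}$. A differentiable $\phi:\mathbb{R}^d\to\mathbb{R}$ is $H$-strongly convex ($H\ge0$) if $\phi(u)\ge\phi(v)+\nabla\phi(v)^\top(u-v)+\frac H2\|u-v\|^2$ for all $u,v$, and $(1/\gamma)$-smooth ($\gamma>0$) if $\phi(u)\le\phi(v)+\nabla\phi(v)^\top(u-v)+\frac1{2\gamma}\|u-v\|^2$ for all $u,v$. Algorithm (SGD with stratified sampling): start with $w_1=0$. At each step $t=1,2,\dots$, a partition of $[n]=\{1,\dots,n\}$ into nonempty disjoint sets $C_1^t,\dots,C_k^t$ with $|C_i^t|=n_i^t$, and positive integers $b_1^t,\dots,b_k^t$, are chosen (possibly depending on the past, but before the step-$t$ sampling).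 Then, independently across $i$ and of the past given these choices, for each $i$ a multiset $B_i^t$ of $b_i^t$ indices is drawn i.i.d. uniformly (with replacement) from $C_i^t$. Set $g_t=\frac1n\sum_{i=1}^k\frac{n_i^t}{b_i^t}\sum_{s\in B_i^t}\nabla\phi_s(w_t)$ and $w_{t+1}=w_t-\eta_t g_t$. The variance is $V_t=\mathbb{E}\big[\|g_t-\nabla P(w_t)\|^2\,\big|\,\text{past}\big]$ (note $\mathbb{E}[g_t\mid\text{past}]=\nabla P(w_t)$). *)

theory Defs
  imports "HOL-Probability.Probability"
begin

definition strongly_convex_grad :: "('a::real_inner \<Rightarrow> real) \<Rightarrow> ('a \<Rightarrow> 'a) \<Rightarrow> real \<Rightarrow> bool" where
  "strongly_convex_grad f f' H \<longleftrightarrow>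
     (\<forall>u v. f u \<ge> f v + f' v \<bullet> (u - v) + H / 2 * (norm (u - v))\<^sup>2)"

definition smooth_grad :: "('a::real_inner \<Rightarrow> real) \<Rightarrow> ('a \<Rightarrow> 'a) \<Rightarrow> real \<Rightarrow> bool" where
  "smooth_grad f f' \<gamma> \<longleftrightarrow>
     (\<forall>u v. f u \<le> f v + f' v \<bullet> (u - v) + 1 / (2 * \<gamma>) * (norm (u - v))\<^sup>2)"

fun iid_pmf :: "nat \<Rightarrow> 'b pmf \<Rightarrow> 'b list pmf" where
  "iid_pmf 0 p = return_pmf []"
| "iid_pmf (Suc k) p = bind_pmf p (\<lambda>x. map_pmf (\<lambda>xs. x # xs) (iid_pmf k p))"

fun seq_pmf :: "'b pmf list \<Rightarrow> 'b list pmf" where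
  "seq_pmf [] = return_pmf []"
| "seq_pmf (p # ps) = bind_pmf p (\<lambda>x. map_pmf (\<lambda>xs. x # xs) (seq_pmf ps))"

text \<open>A history is the list of past step samples, most recent first. A step sample
  is a list (indexed by stratum i) of the lists of drawn indices B_i.
  The strategy C maps a history to the partition C_1..C_k (as a list of sets),
  b maps a history to the batch sizes b_1..b_k.\<close>
type_synonym hist = "nat list list list"

definition valid_strategy :: "nat \<Rightarrow> (hist \<Rightarrow> nat set list) \<Rightarrow> (hist \<Rightarrow> nat list) \<Rightarrow> bool" where
  "valid_strategy n C b \<longleftrightarrow>
     (\<forall>h. length (b h) = length (C h)
        \<and> (\<forall>i < length (C h). C h ! i \<noteq> {} \<and> b h ! i > 0)
        \<and> (\<forall>i < length (C h). \<forall>j < length (C h). i \<noteq> j \<longrightarrow> C h ! i \<inter> C h ! j = {})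
        \<and> (\<Union>i < length (C h). C h ! i) = {1..n})"

definition step_pmf :: "(hist \<Rightarrow> nat set list) \<Rightarrow> (hist \<Rightarrow> nat list) \<Rightarrow> hist \<Rightarrow> nat list list pmf" where
  "step_pmf C b h = seq_pmf (map2 (\<lambda>Ci bi. iid_pmf bi (pmf_of_set Ci)) (C h) (b h))"

fun hist_pmf :: "(hist \<Rightarrow> nat set list) \<Rightarrow> (hist \<Rightarrow> nat list) \<Rightarrow> nat \<Rightarrow> hist pmf" where
  "hist_pmf C b 0 = return_pmf []"
| "hist_pmf C b (Suc t) = bind_pmf (hist_pmf C b t) (\<lambda>h. map_pmf (\<lambda>s. s # h) (step_pmf C b h))"

definition est :: "nat \<Rightarrow> (nat \<Rightarrow> 'a::real_vector \<Rightarrow> 'a) \<Rightarrow> nat set list \<Rightarrow> nat list \<Rightarrow> 'a \<Rightarrow> nat list list \<Rightarrow> 'a" where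
  "est n grad Cs bs x s =
     (1 / real n) *\<^sub>R (\<Sum>i < length Cs. (real (card (Cs ! i)) / real (bs ! i)) *\<^sub>R
                         sum_list (map (\<lambda>j. grad j x) (s ! i)))"

text \<open>Iterate w_{t+1} determined by a history of length t (w_1 = 0).\<close>
fun W :: "nat \<Rightarrow> (nat \<Rightarrow> 'a::real_vector \<Rightarrow> 'a) \<Rightarrow> (nat \<Rightarrow> real) \<Rightarrow> (hist \<Rightarrow> nat set list)
          \<Rightarrow> (hist \<Rightarrow> nat list) \<Rightarrow> hist \<Rightarrow> 'a" where
  "W n grad eta C b [] = 0"
| "W n grad eta C b (s # h) =
     W n grad eta C b h - eta (Suc (length h)) *\<^sub>R est n grad (C h) (b h) (W n grad eta C b h) s"

text \<open>Conditional variance V_t given a history h of length t-1.\<close>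
definition Var_step :: "nat \<Rightarrow> (nat \<Rightarrow> 'a::real_normed_vector \<Rightarrow> 'a) \<Rightarrow> (nat \<Rightarrow> real) \<Rightarrow> (hist \<Rightarrow> nat set list)
          \<Rightarrow> (hist \<Rightarrow> nat list) \<Rightarrow> ('a \<Rightarrow> 'a) \<Rightarrow> hist \<Rightarrow> real" where
  "Var_step n grad eta C b gP h =
     measure_pmf.expectation (step_pmf C b h)
       (\<lambda>s. (norm (est n grad (C h) (b h) (W n grad eta C b h) s - gP (W n grad eta C b h)))\<^sup>2)"

end

theory Submission
  imports Defs
begin

lemma iid_fin: "finite (set_pmf p) \<Longrightarrow> finite (set_pmf (iid_pmf k p))"
  by (induction k) auto

lemma iid_len: "xs \<in> set_pmf (iid_pmf k p) \<Longrightarrow> length xs = k"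
  by (induction k arbitrary: xs) auto

lemma seq_fin: "(\<And>p. p \<in> set ps \<Longrightarrow> finite (set_pmf p)) \<Longrightarrow> finite (set_pmf (seq_pmf ps))"
  by (induction ps) auto

lemma seq_len: "xs \<in> set_pmf (seq_pmf ps) \<Longrightarrow> length xs = length ps"
  by (induction ps arbitrary: xs) auto

lemma valid_fin:
  assumes "valid_strategy n C b" "i < length (C h)"
  shows "finite (C h ! i)" "C h ! i \<noteq> {}" "b h ! i > 0" "length (b h) = length (C h)"
proof -
  have "C h ! i \<subseteq> {1..n}" using assms unfolding valid_strategy_def by blast
  then show "finite (C h ! i)" using finite_subset by blast
qed (use assms in \<open>auto simp: valid_strategy_def\<close>)

lemma step_fin: "valid_strategy n C b \<Longrightarrow> finite (set_pmf (step_pmf C b h))"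
  unfolding step_pmf_def
  apply (rule seq_fin)
  apply (auto simp: set_zip in_set_conv_nth intro!: iid_fin)
  apply (subst set_pmf_of_set)
  using valid_fin by auto

lemma step_len: "valid_strategy n C b \<Longrightarrow> s \<in> set_pmf (step_pmf C b h) \<Longrightarrow> length s = length (C h)"
  unfolding step_pmf_def by (auto dest!: seq_len simp: valid_strategy_def)

lemma hist_fin: "valid_strategy n C b \<Longrightarrow> finite (set_pmf (hist_pmf C b t))"
  by (induction t) (auto intro: step_fin)

lemma hist_len: "h \<in> set_pmf (hist_pmf C b t) \<Longrightarrow> length h = t"
  by (induction t arbitrary: h) auto

lemma exp_bind:
  fixes f :: "_ \<Rightarrow> real"
  assumes "finite (set_pmf p)" "\<And>x. x \<in> set_pmf p \<Longrightarrow> finite (set_pmf (q x))"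
  shows "measure_pmf.expectation (bind_pmf p q) f = measure_pmf.expectation p (\<lambda>x. measure_pmf.expectation (q x) f)"
  apply (subst pmf_expectation_bind[of "set_pmf p"])
  using assms apply auto
  apply (subst integral_measure_pmf_real[of "set_pmf p"])
  using assms by (auto simp: mult.commute)

lemma exp_mono:
  fixes f g :: "_ \<Rightarrow> real"
  assumes "finite (set_pmf p)" "\<And>x. x \<in> set_pmf p \<Longrightarrow> f x \<le> g x"
  shows "measure_pmf.expectation p f \<le> measure_pmf.expectation p g"
  apply (subst integral_measure_pmf_real[of "set_pmf p"], simp add: assms, simp)
  apply (subst integral_measure_pmf_real[of "set_pmf p"], simp add: assms, simp)
  apply (rule sum_mono) using assms by (auto intro: mult_right_mono)

lemma exp_cong:
  fixes f g :: "_ \<Rightarrow> real"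
  assumes "finite (set_pmf p)" "\<And>x. x \<in> set_pmf p \<Longrightarrow> f x = g x"
  shows "measure_pmf.expectation p f = measure_pmf.expectation p g"
  using exp_mono[of p f g] exp_mono[of p g f] assms by force


lemma iid_exp:
  fixes f :: "_ \<Rightarrow> real"
  assumes "finite (set_pmf p)"
  shows "measure_pmf.expectation (iid_pmf k p) (\<lambda>xs. sum_list (map f xs)) = real k * measure_pmf.expectation p f"
proof (induction k)
  case 0 then show ?case by simp
next
  case (Suc k)
  have "measure_pmf.expectation (iid_pmf (Suc k) p) (\<lambda>xs. sum_list (map f xs))
     = measure_pmf.expectation p (\<lambda>x. measure_pmf.expectation (iid_pmf k p) (\<lambda>xs. f x + sum_list (map f xs)))"
    by (simp, subst exp_bind) (auto simp: assms iid_fin)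
  also have "\<dots> = measure_pmf.expectation p (\<lambda>x. f x + real k * measure_pmf.expectation p f)"
    by (subst Bochner_Integration.integral_add) (auto simp: Suc integrable_measure_pmf_finite iid_fin assms)
  also have "\<dots> = real (Suc k) * measure_pmf.expectation p f"
    by (subst Bochner_Integration.integral_add) (auto simp: integrable_measure_pmf_finite assms algebra_simps)
  finally show ?case .
qed

lemma seq_exp:
  fixes F :: "nat \<Rightarrow> _ \<Rightarrow> real"
  assumes "\<And>p. p \<in> set ps \<Longrightarrow> finite (set_pmf p)"
  shows "measure_pmf.expectation (seq_pmf ps) (\<lambda>s. \<Sum>i<length ps. F i (s ! i))
         = (\<Sum>i<length ps. measure_pmf.expectation (ps ! i) (F i))"
  using assms
proof (induction ps arbitrary: F)
  case Nil then show ?case by simp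
next
  case (Cons p ps)
  have fp: "finite (set_pmf p)" and fps: "\<And>q. q \<in> set ps \<Longrightarrow> finite (set_pmf q)" using Cons.prems by auto
  have "measure_pmf.expectation (seq_pmf (p # ps)) (\<lambda>s. \<Sum>i<length (p # ps). F i (s ! i))
     = measure_pmf.expectation p (\<lambda>x. measure_pmf.expectation (seq_pmf ps)
          (\<lambda>xs. F 0 x + (\<Sum>i<length ps. F (Suc i) (xs ! i))))"
    by (simp del: sum.lessThan_Suc add: sum.lessThan_Suc_shift, subst exp_bind) (auto simp: fp fps seq_fin)
  also have "\<dots> = measure_pmf.expectation p (\<lambda>x. F 0 x + (\<Sum>i<length ps. measure_pmf.expectation (ps ! i) (F (Suc i))))"
  proof -
    have "measure_pmf.expectation (seq_pmf ps) (\<lambda>xs. F 0 x + (\<Sum>i<length ps. F (Suc i) (xs ! i)))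
       = F 0 x + (\<Sum>i<length ps. measure_pmf.expectation (ps ! i) (F (Suc i)))" for x
    proof -
      have "measure_pmf.expectation (seq_pmf ps) (\<lambda>xs. F 0 x + (\<Sum>i<length ps. F (Suc i) (xs ! i)))
         = measure_pmf.expectation (seq_pmf ps) (\<lambda>xs. F 0 x) + measure_pmf.expectation (seq_pmf ps) (\<lambda>xs. (\<Sum>i<length ps. F (Suc i) (xs ! i)))"
        by (rule Bochner_Integration.integral_add) (auto intro!: integrable_measure_pmf_finite seq_fin fps)
      then show ?thesis using Cons.IH[OF fps, of "\<lambda>i. F (Suc i)"] by simp
    qed
    then show ?thesis by simp
  qed
  also have "\<dots> = (\<Sum>i<length (p # ps). measure_pmf.expectation ((p # ps) ! i) (F i))"
    by (subst Bochner_Integration.integral_add) (auto simp: integrable_measure_pmf_finite fp sum.lessThan_Suc_shift simp del: sum.lessThan_Suc)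
  finally show ?case .
qed

lemma inner_sum_list: "sum_list (map g xs) \<bullet> v = sum_list (map (\<lambda>j. g j \<bullet> v) xs)"
  by (induction xs) (auto simp: inner_add_left)

lemma unbiased:
  fixes grad :: "nat \<Rightarrow> 'a::real_inner \<Rightarrow> 'a"
  assumes strat: "valid_strategy n C b"
  shows "measure_pmf.expectation (step_pmf C b h) (\<lambda>s. est n grad (C h) (b h) x s \<bullet> v)
       = ((1 / real n) *\<^sub>R (\<Sum>i=1..n. grad i x)) \<bullet> v"
proof -
  define m where "m = length (C h)"
  define f where "f = (\<lambda>j. grad j x \<bullet> v)"
  have lb: "length (b h) = m" using strat by (auto simp: valid_strategy_def m_def)
  define ps where "ps = map2 (\<lambda>Ci bi. iid_pmf bi (pmf_of_set Ci)) (C h) (b h)"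
  have lps: "length ps = m" by (simp add: ps_def lb m_def)
  have psi: "ps ! i = iid_pmf (b h ! i) (pmf_of_set (C h ! i))" if "i < m" for i
    using that by (simp add: ps_def lb m_def)
  have fin: "finite (C h ! i)" "C h ! i \<noteq> {}" "b h ! i > 0" if "i < m" for i
    using valid_fin[OF strat, of i h] that by (auto simp: m_def)
  have finps: "finite (set_pmf p)" if "p \<in> set ps" for p
    using that by (auto simp: in_set_conv_nth lps psi fin intro!: iid_fin)
  have "measure_pmf.expectation (step_pmf C b h) (\<lambda>s. est n grad (C h) (b h) x s \<bullet> v)
     = measure_pmf.expectation (seq_pmf ps) (\<lambda>s. \<Sum>i<length ps. (1 / real n) * (real (card (C h ! i)) / real (b h ! i)) * sum_list (map f (s ! i)))"
    by (simp add: step_pmf_def ps_def[symmetric] est_def lps m_def[symmetric] inner_sum_left inner_sum_list f_def sum_distrib_left mult.assoc)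
  also have "\<dots> = (\<Sum>i<m. (1 / real n) * (real (card (C h ! i)) / real (b h ! i)) * (real (b h ! i) * (sum f (C h ! i) / real (card (C h ! i)))))"
    apply (subst seq_exp[OF finps], assumption)
    apply (simp add: lps)
    apply (rule sum.cong, simp add: m_def lb)
    apply (simp add: psi)
    apply (subst iid_exp)
     apply (simp add: fin)
    apply (simp add: integral_pmf_of_set fin)
    done
  also have "\<dots> = (1 / real n) * (\<Sum>i<m. sum f (C h ! i))"
  proof -
    have eq: "1 / real n * (real (card (C h ! i)) / real (b h ! i)) * (real (b h ! i) * (sum f (C h ! i) / real (card (C h ! i))))
      = 1 / real n * sum f (C h ! i)" if "i < m" for i
    proof -
      have "real (card (C h ! i)) > 0" "real (b h ! i) > 0" using fin that by (auto simp: card_gt_0_iff)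
      then show ?thesis by (simp add: field_simps)
    qed
    have "(\<Sum>i<m. 1 / real n * (real (card (C h ! i)) / real (b h ! i)) * (real (b h ! i) * (sum f (C h ! i) / real (card (C h ! i)))))
       = (\<Sum>i<m. 1 / real n * sum f (C h ! i))" by (rule sum.cong[OF refl]) (rule eq, simp)
    also have "\<dots> = (1 / real n) * (\<Sum>i<m. sum f (C h ! i))" by (rule sum_distrib_left[symmetric])
    finally show ?thesis .
  qed
  also have "(\<Sum>i<m. sum f (C h ! i)) = sum f (\<Union>i<m. C h ! i)"
    apply (subst sum.UNION_disjoint)
    using fin strat by (auto simp: valid_strategy_def m_def)
  also have "(\<Union>i<m. C h ! i) = {1..n}" using strat by (simp add: valid_strategy_def m_def)
  finally show ?thesis by (simp add: f_def inner_sum_left)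
qed

lemma real_key:
  fixes Pw Pw' Pws A B G2 GE E2 D2 \<eta> \<gamma> H :: real
  assumes sc: "Pws \<ge> Pw - A + H/2 * D2"
    and sm: "Pw' \<le> Pw - \<eta> * (G2 + GE) + 1/(2*\<gamma>) * (\<eta>^2 * (G2 + 2*GE + E2))"
    and G2: "G2 \<ge> 0" and E2: "E2 \<ge> 0" and eta: "\<eta> > 0" "\<eta> \<le> \<gamma>"
  shows "Pw' - Pws \<le> ((1/\<eta> - H) * D2 - (1/\<eta>) * (D2 - 2*\<eta>*(A+B) + \<eta>^2*(G2+2*GE+E2)))/2
            + \<eta> * E2 - (B - \<eta>^2/\<gamma> * GE)"
proof -
  have g: "\<gamma> > 0" using eta by linarith
  have k: "0 \<le> (\<eta>/2) * (1 - \<eta>/\<gamma>) * (G2 + E2)"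
    using eta g G2 E2 by (intro mult_nonneg_nonneg) (auto simp: field_simps)
  have eq: "((1/\<eta> - H) * D2 - (1/\<eta>) * (D2 - 2*\<eta>*(A+B) + \<eta>^2*(G2+2*GE+E2)))/2
            + \<eta> * E2 - (B - \<eta>^2/\<gamma> * GE)
         = (A - H/2 * D2 - \<eta> * (G2 + GE) + 1/(2*\<gamma>) * (\<eta>^2 * (G2 + 2*GE + E2))) + (\<eta>/2) * (1 - \<eta>/\<gamma>) * (G2 + E2)"
    using eta g by (simp add: field_simps power2_eq_square)
  show ?thesis unfolding eq using sc sm k by linarith
qed

lemma pointwise:
  fixes P :: "'a::real_inner \<Rightarrow> real"
  assumes sc: "P ws \<ge> P w + G \<bullet> (ws - w) + H/2 * (norm (ws - w))\<^sup>2"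
    and sm: "P (w - \<eta> *\<^sub>R g) \<le> P w + G \<bullet> ((w - \<eta> *\<^sub>R g) - w) + 1/(2*\<gamma>) * (norm ((w - \<eta> *\<^sub>R g) - w))\<^sup>2"
    and eta: "\<eta> > 0" "\<eta> \<le> \<gamma>"
  shows "P (w - \<eta> *\<^sub>R g) - P ws \<le> ((1/\<eta> - H) * (norm (w - ws))\<^sup>2 - (1/\<eta>) * (norm (w - \<eta> *\<^sub>R g - ws))\<^sup>2)/2
            + \<eta> * (norm (g - G))\<^sup>2 - (g - G) \<bullet> ((w - ws) - (\<eta>^2/\<gamma>) *\<^sub>R G)"
proof -
  define d where "d = w - ws"
  define e where "e = g - G"
  have g: "g = G + e" by (simp add: e_def)
  have 1: "(norm (ws - w))\<^sup>2 = d \<bullet> d" by (simp add: d_def power2_norm_eq_inner inner_commute inner_diff_left inner_diff_right)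
  have 0: "(norm (w - ws))\<^sup>2 = d \<bullet> d" by (simp add: d_def power2_norm_eq_inner)
  have 2: "G \<bullet> (ws - w) = - (G \<bullet> d)" by (simp add: d_def inner_diff_right)
  have 3: "G \<bullet> ((w - \<eta> *\<^sub>R g) - w) = - \<eta> * (G \<bullet> G + G \<bullet> e)" by (simp add: g inner_add_right)
  have 4: "(norm ((w - \<eta> *\<^sub>R g) - w))\<^sup>2 = \<eta>^2 * (G \<bullet> G + 2 * (G \<bullet> e) + e \<bullet> e)"
  proof -
    have x: "(w - \<eta> *\<^sub>R g) - w = - (\<eta> *\<^sub>R (G + e))" by (simp add: g)
    show ?thesis unfolding x power2_norm_eq_inner
      by (simp add: inner_add_left inner_add_right inner_commute power2_eq_square algebra_simps)
  qed
  have 5: "(norm (w - \<eta> *\<^sub>R g - ws))\<^sup>2 = d \<bullet> d - 2 * \<eta> * (G \<bullet> d + e \<bullet> d) + \<eta>^2 * (G \<bullet> G + 2 * (G \<bullet> e) + e \<bullet> e)"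
  proof -
    have x: "w - \<eta> *\<^sub>R g - ws = d - \<eta> *\<^sub>R (G + e)" by (simp add: d_def g algebra_simps)
    show ?thesis unfolding x power2_norm_eq_inner
      by (simp add: inner_add_left inner_add_right inner_diff_left inner_diff_right inner_commute power2_eq_square algebra_simps)
  qed
  have 6: "(norm (g - G))\<^sup>2 = e \<bullet> e" by (simp add: e_def power2_norm_eq_inner)
  have 7: "(g - G) \<bullet> ((w - ws) - (\<eta>^2/\<gamma>) *\<^sub>R G) = e \<bullet> d - \<eta>^2/\<gamma> * (G \<bullet> e)"
    by (simp add: e_def[symmetric] d_def[symmetric] inner_diff_right inner_commute)
  show ?thesis unfolding 0 5 6 7
    apply (rule real_key[where A="G \<bullet> d" and Pw="P w"])
    using sc sm eta unfolding 1 2 3 4 by auto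
qed


lemma lin4:
  fixes f g k :: "_ \<Rightarrow> real"
  assumes "finite (set_pmf p)"
  shows "measure_pmf.expectation p (\<lambda>s. \<alpha> + \<beta> * f s + \<delta> * g s + \<kappa> * k s)
       = \<alpha> + \<beta> * measure_pmf.expectation p f + \<delta> * measure_pmf.expectation p g + \<kappa> * measure_pmf.expectation p k"
  using assms by (simp add: integrable_measure_pmf_finite)

lemma sum_shift1: "(\<Sum>t=1..T. f t) = (\<Sum>m<T. f (Suc m) :: real)"
  by (induction T) auto

lemma hist_drop:
  "k \<le> T \<Longrightarrow> map_pmf (drop (T - k)) (hist_pmf C b T) = hist_pmf C b k"
proof (induction T arbitrary: k)
  case 0 then show ?case by simp
next
  case (Suc T)
  show ?case
  proof (cases "k = Suc T")
    case True then show ?thesis by simp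
  next
    case False
    then have k: "k \<le> T" using Suc.prems by simp
    have "map_pmf (drop (Suc T - k)) (hist_pmf C b (Suc T))
        = bind_pmf (hist_pmf C b T) (\<lambda>h. map_pmf (\<lambda>s. drop (Suc T - k) (s # h)) (step_pmf C b h))"
      by (simp add: map_bind_pmf pmf.map_comp o_def)
    also have "\<dots> = bind_pmf (hist_pmf C b T) (\<lambda>h. return_pmf (drop (T - k) h))"
      using k by (simp add: Suc_diff_le)
    also have "\<dots> = map_pmf (drop (T - k)) (hist_pmf C b T)" by (simp add: map_pmf_def)
    finally show ?thesis using Suc.IH[OF k] by simp
  qed
qed

lemma arith1:
  fixes p' p k N0 c N1 e E L Gu :: real
  assumes "p' - p \<le> (k * N0 - c * N1)/2 + e * E - (L - Gu)"
  shows "p' \<le> p + k / 2 * N0 + Gu + (- c / 2) * N1 + e * E + (-1) * L"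
  using assms by (simp add: field_simps)

lemma arith2:
  fixes x p k A c Dd v :: real
  assumes "x \<le> p + k / 2 * A + (- c / 2) * Dd + (1 / c) * v"
  shows "x - p \<le> (k * A - c * Dd) / 2 + v / c"
proof -
  have "(k * A - c * Dd) / 2 = k / 2 * A + (- c / 2) * Dd" by (simp add: field_simps)
  moreover have "(1 / c) * v = v / c" by simp
  ultimately show ?thesis using assms by linarith
qed

lemma arith3:
  fixes L A B S aa N :: real
  assumes "L \<le> (A - B) / 2 + S" "0 \<le> B" "A = aa * N"
  shows "L \<le> aa / 2 * N + S"
  using assms by (simp add: field_simps)

theorem theorem1:
  fixes n :: nat and \<phi> :: "nat \<Rightarrow> 'a::euclidean_space \<Rightarrow> real"
    and grad :: "nat \<Rightarrow> 'a \<Rightarrow> 'a"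
    and H \<gamma> a :: real and wstar :: 'a
    and C :: "hist \<Rightarrow> nat set list" and b :: "hist \<Rightarrow> nat list" and T :: nat
  assumes n: "n \<ge> 1"
    and diff: "\<And>s w. s \<in> {1..n} \<Longrightarrow> (\<phi> s has_derivative (\<lambda>v. grad s w \<bullet> v)) (at w)"
    and H: "H \<ge> 0" and \<gamma>: "\<gamma> > 0"
    and sc: "strongly_convex_grad (\<lambda>w. (1 / real n) * (\<Sum>i=1..n. \<phi> i w))
                                  (\<lambda>w. (1 / real n) *\<^sub>R (\<Sum>i=1..n. grad i w)) H"
    and sm: "smooth_grad (\<lambda>w. (1 / real n) * (\<Sum>i=1..n. \<phi> i w))
                         (\<lambda>w. (1 / real n) *\<^sub>R (\<Sum>i=1..n. grad i w)) \<gamma>"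
    and opt: "\<And>w. (1 / real n) * (\<Sum>i=1..n. \<phi> i wstar) \<le> (1 / real n) * (\<Sum>i=1..n. \<phi> i w)"
    and strat: "valid_strategy n C b"
    and a: "a \<ge> 1 / \<gamma> - H"
    and T: "T \<ge> 1"
  shows
   "let P = (\<lambda>w. (1 / real n) * (\<Sum>i=1..n. \<phi> i w));
        gP = (\<lambda>w. (1 / real n) *\<^sub>R (\<Sum>i=1..n. grad i w));
        eta = (\<lambda>t::nat. 1 / (a + H * real t));
        EP = (\<lambda>t. measure_pmf.expectation (hist_pmf C b t) (\<lambda>h. P (W n grad eta C b h)))
    in Min (EP ` {1..T}) - P wstar \<le> (1 / real T) * (\<Sum>t=1..T. EP t) - P wstar
     \<and> (1 / real T) * (\<Sum>t=1..T. EP t) - P wstar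
         \<le> (1 / real T) * (a / 2 * (norm wstar)\<^sup>2
              + measure_pmf.expectation (hist_pmf C b T)
                  (\<lambda>h. \<Sum>t=1..T. Var_step n grad eta C b gP (drop (T - (t - 1)) h) / (a + H * real t)))"
proof -
  define P where "P = (\<lambda>w. (1 / real n) * (\<Sum>i=1..n. \<phi> i w))"
  define gP where "gP = (\<lambda>w. (1 / real n) *\<^sub>R (\<Sum>i=1..n. grad i w))"
  define eta where "eta = (\<lambda>t::nat. 1 / (a + H * real t))"
  define EP where "EP = (\<lambda>t. measure_pmf.expectation (hist_pmf C b t) (\<lambda>h. P (W n grad eta C b h)))"
  define W' where "W' = W n grad eta C b"
  define D where "D = (\<lambda>m. measure_pmf.expectation (hist_pmf C b m) (\<lambda>h. (norm (W' h - wstar))\<^sup>2))"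
  define VV where "VV = (\<lambda>m. measure_pmf.expectation (hist_pmf C b m) (Var_step n grad eta C b gP))"
  define cc where "cc = (\<lambda>m::nat. a + H * real m)"
  have sc': "\<And>u v. P u \<ge> P v + gP v \<bullet> (u - v) + H / 2 * (norm (u - v))\<^sup>2"
    using sc unfolding strongly_convex_grad_def P_def gP_def by blast
  have sm': "\<And>u v. P u \<le> P v + gP v \<bullet> (u - v) + 1 / (2 * \<gamma>) * (norm (u - v))\<^sup>2"
    using sm unfolding smooth_grad_def P_def gP_def by blast
  have ccge: "cc m \<ge> 1 / \<gamma>" if "m \<ge> 1" for m
  proof -
    have "H * real m \<ge> H * 1" using H that by (intro mult_left_mono) auto
    then show ?thesis using a by (simp add: cc_def)
  qed
  have ccpos: "cc m > 0" if "m \<ge> 1" for m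
    using ccge[OF that] \<gamma> by (smt (verit) divide_pos_pos)
  have ccSuc: "cc (Suc m) - H = cc m" for m by (simp add: cc_def algebra_simps)
  have step: "measure_pmf.expectation (step_pmf C b h) (\<lambda>s. P (W' (s # h)))
      \<le> P wstar + cc m / 2 * (norm (W' h - wstar))\<^sup>2
         - cc (Suc m) / 2 * measure_pmf.expectation (step_pmf C b h) (\<lambda>s. (norm (W' (s # h) - wstar))\<^sup>2)
         + (1 / cc (Suc m)) * Var_step n grad eta C b gP h"
    if lh: "length h = m" for h m
  proof -
    define w where "w = W' h"
    define G where "G = gP w"
    define g where "g = (\<lambda>s. est n grad (C h) (b h) w s)"
    define c where "c = cc (Suc m)"
    define \<eta> where "\<eta> = 1 / c"
    define u where "u = (w - wstar) - (\<eta>^2/\<gamma>) *\<^sub>R G"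
    have cpos: "c > 0" and cge: "c \<ge> 1 / \<gamma>" using ccpos ccge by (auto simp: c_def)
    have etapos: "\<eta> > 0" using cpos by (simp add: \<eta>_def)
    have etale: "\<eta> \<le> \<gamma>" using cge cpos \<gamma> unfolding \<eta>_def by (simp add: field_simps)
    have Ws: "W' (s # h) = w - \<eta> *\<^sub>R g s" for s
      by (simp add: W'_def w_def g_def \<eta>_def c_def cc_def eta_def lh)
    have inv: "1 / \<eta> = c" by (simp add: \<eta>_def)
    have pw: "P (W' (s # h)) \<le> (P wstar + cc m / 2 * (norm (w - wstar))\<^sup>2 + G \<bullet> u)
        + (- c / 2) * (norm (W' (s # h) - wstar))\<^sup>2 + \<eta> * (norm (g s - G))\<^sup>2 + (-1) * (g s \<bullet> u)" for s
    proof -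
      have "P (w - \<eta> *\<^sub>R g s) - P wstar \<le> ((1/\<eta> - H) * (norm (w - wstar))\<^sup>2 - (1/\<eta>) * (norm (w - \<eta> *\<^sub>R g s - wstar))\<^sup>2)/2
            + \<eta> * (norm (g s - G))\<^sup>2 - (g s - G) \<bullet> u"
        unfolding u_def
        by (rule pointwise[OF sc'[where u=wstar and v=w, folded G_def] sm'[where u="w - \<eta> *\<^sub>R g s" and v=w, folded G_def] etapos etale])
      moreover have eq1: "1/\<eta> - H = cc m" using ccSuc[of m] by (simp add: inv c_def)
      ultimately have "P (W' (s # h)) - P wstar \<le> (cc m * (norm (w - wstar))\<^sup>2 - c * (norm (W' (s # h) - wstar))\<^sup>2)/2
            + \<eta> * (norm (g s - G))\<^sup>2 - (g s \<bullet> u - G \<bullet> u)"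
        unfolding Ws eq1 inv inner_diff_left by simp
      then show ?thesis by (rule arith1)
    qed
    have fin: "finite (set_pmf (step_pmf C b h))" using step_fin[OF strat] .
    have "measure_pmf.expectation (step_pmf C b h) (\<lambda>s. P (W' (s # h)))
       \<le> measure_pmf.expectation (step_pmf C b h) (\<lambda>s. (P wstar + cc m / 2 * (norm (w - wstar))\<^sup>2 + G \<bullet> u)
        + (- c / 2) * (norm (W' (s # h) - wstar))\<^sup>2 + \<eta> * (norm (g s - G))\<^sup>2 + (-1) * (g s \<bullet> u))"
      by (rule exp_mono[OF fin pw])
    also have "\<dots> = (P wstar + cc m / 2 * (norm (w - wstar))\<^sup>2 + G \<bullet> u)
        + (- c / 2) * measure_pmf.expectation (step_pmf C b h) (\<lambda>s. (norm (W' (s # h) - wstar))\<^sup>2)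
        + \<eta> * measure_pmf.expectation (step_pmf C b h) (\<lambda>s. (norm (g s - G))\<^sup>2)
        + (-1) * measure_pmf.expectation (step_pmf C b h) (\<lambda>s. g s \<bullet> u)"
      by (rule lin4[OF fin])
    also have "measure_pmf.expectation (step_pmf C b h) (\<lambda>s. g s \<bullet> u) = G \<bullet> u"
      unfolding g_def G_def gP_def by (rule unbiased[OF strat])
    also have "measure_pmf.expectation (step_pmf C b h) (\<lambda>s. (norm (g s - G))\<^sup>2) = Var_step n grad eta C b gP h"
      by (simp add: Var_step_def g_def G_def w_def W'_def)
    finally show ?thesis by (simp add: w_def c_def \<eta>_def)
  qed
  have histstep: "EP (Suc m) - P wstar \<le> (cc m * D m - cc (Suc m) * D (Suc m)) / 2 + VV m / cc (Suc m)" for m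
  proof -
    have fh: "finite (set_pmf (hist_pmf C b m))" using hist_fin[OF strat] .
    have fs: "\<And>h. finite (set_pmf (step_pmf C b h))" using step_fin[OF strat] .
    have bind: "measure_pmf.expectation (hist_pmf C b (Suc m)) f
        = measure_pmf.expectation (hist_pmf C b m) (\<lambda>h. measure_pmf.expectation (step_pmf C b h) (\<lambda>s. f (s # h)))" for f :: "hist \<Rightarrow> real"
      by (simp, subst exp_bind) (auto simp: fh fs)
    have "EP (Suc m) \<le> measure_pmf.expectation (hist_pmf C b m) (\<lambda>h. P wstar + cc m / 2 * (norm (W' h - wstar))\<^sup>2
         + (- cc (Suc m) / 2) * measure_pmf.expectation (step_pmf C b h) (\<lambda>s. (norm (W' (s # h) - wstar))\<^sup>2)
         + (1 / cc (Suc m)) * Var_step n grad eta C b gP h)"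
      unfolding EP_def bind W'_def[symmetric]
    proof (rule exp_mono[OF fh])
      fix h assume "h \<in> set_pmf (hist_pmf C b m)"
      then have "length h = m" by (rule hist_len)
      from step[OF this] show "measure_pmf.expectation (step_pmf C b h) (\<lambda>s. P (W' (s # h)))
         \<le> P wstar + cc m / 2 * (norm (W' h - wstar))\<^sup>2
         + (- cc (Suc m) / 2) * measure_pmf.expectation (step_pmf C b h) (\<lambda>s. (norm (W' (s # h) - wstar))\<^sup>2)
         + (1 / cc (Suc m)) * Var_step n grad eta C b gP h" by simp
    qed
    also have "\<dots> = P wstar + cc m / 2 * D m + (- cc (Suc m) / 2) * D (Suc m) + (1 / cc (Suc m)) * VV m"
      by (subst lin4[OF fh]) (simp only: D_def VV_def bind)
    finally show ?thesis by (rule arith2)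
  qed
  have sumEP: "(\<Sum>t=1..T. EP t) - real T * P wstar
      \<le> (cc 0 * D 0 - cc T * D T) / 2 + (\<Sum>m<T. VV m / cc (Suc m))"
  proof -
    have "(\<Sum>t=1..T. EP t) - real T * P wstar = (\<Sum>m<T. EP (Suc m) - P wstar)"
      by (simp only: sum_shift1[of EP T] sum_subtractf) simp
    also have "\<dots> \<le> (\<Sum>m<T. (cc m * D m - cc (Suc m) * D (Suc m)) / 2 + VV m / cc (Suc m))"
      by (rule sum_mono) (rule histstep)
    also have "\<dots> = (cc 0 * D 0 - cc T * D T) / 2 + (\<Sum>m<T. VV m / cc (Suc m))"
    proof -
      have "(\<Sum>m<T. (cc m * D m - cc (Suc m) * D (Suc m)) / 2) = - (\<Sum>m<T. cc (Suc m) * D (Suc m) - cc m * D m) / 2"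
        by (simp add: sum_divide_distrib[symmetric] sum_negf[symmetric])
      also have "\<dots> = (cc 0 * D 0 - cc T * D T) / 2"
        by (subst sum_lessThan_telescope[where f = "\<lambda>m. cc m * D m"]) simp
      finally show ?thesis by (simp add: sum.distrib)
    qed
    finally show ?thesis .
  qed
  have D0: "D 0 = (norm wstar)\<^sup>2" by (simp add: D_def W'_def)
  have DT: "D T \<ge> 0" unfolding D_def by (rule Bochner_Integration.integral_nonneg) simp
  have cT: "cc T > 0" using ccpos T by auto
  have Vsum: "measure_pmf.expectation (hist_pmf C b T)
                  (\<lambda>h. \<Sum>t=1..T. Var_step n grad eta C b gP (drop (T - (t - 1)) h) / (a + H * real t))
      = (\<Sum>m<T. VV m / cc (Suc m))"
  proof -
    have "measure_pmf.expectation (hist_pmf C b T)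
                  (\<lambda>h. \<Sum>t=1..T. Var_step n grad eta C b gP (drop (T - (t - 1)) h) / (a + H * real t))
        = (\<Sum>t=1..T. measure_pmf.expectation (hist_pmf C b T) (\<lambda>h. Var_step n grad eta C b gP (drop (T - (t - 1)) h)) / (a + H * real t))"
      by (simp add: integrable_measure_pmf_finite hist_fin[OF strat])
    also have "\<dots> = (\<Sum>m<T. measure_pmf.expectation (hist_pmf C b T) (\<lambda>h. Var_step n grad eta C b gP (drop (T - m) h)) / cc (Suc m))"
      by (subst sum_shift1) (simp add: cc_def)
    also have "\<dots> = (\<Sum>m<T. VV m / cc (Suc m))"
    proof (rule sum.cong[OF refl])
      fix m assume "m \<in> {..<T}"
      then have "m \<le> T" by simp
      then have "measure_pmf.expectation (hist_pmf C b T) (\<lambda>h. Var_step n grad eta C b gP (drop (T - m) h))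
          = measure_pmf.expectation (map_pmf (drop (T - m)) (hist_pmf C b T)) (Var_step n grad eta C b gP)"
        by simp
      also have "\<dots> = VV m" using hist_drop[OF \<open>m \<le> T\<close>, of C b] by (simp add: VV_def)
      finally show "measure_pmf.expectation (hist_pmf C b T) (\<lambda>h. Var_step n grad eta C b gP (drop (T - m) h)) / cc (Suc m)
          = VV m / cc (Suc m)" by simp
    qed
    finally show ?thesis .
  qed
  have Tpos: "real T > 0" using T by simp
  have part2: "(1 / real T) * (\<Sum>t=1..T. EP t) - P wstar
         \<le> (1 / real T) * (a / 2 * (norm wstar)\<^sup>2
              + measure_pmf.expectation (hist_pmf C b T)
                  (\<lambda>h. \<Sum>t=1..T. Var_step n grad eta C b gP (drop (T - (t - 1)) h) / (a + H * real t)))"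
  proof -
    have "(\<Sum>t=1..T. EP t) - real T * P wstar \<le> a / 2 * (norm wstar)\<^sup>2 + (\<Sum>m<T. VV m / cc (Suc m))"
    proof -
      have "cc T * D T \<ge> 0" using cT DT by simp
      moreover have "cc 0 * D 0 = a * (norm wstar)\<^sup>2" by (simp add: cc_def D0)
      ultimately show ?thesis using sumEP by (intro arith3) auto
    qed
    then have "(1 / real T) * ((\<Sum>t=1..T. EP t) - real T * P wstar) \<le> (1 / real T) * (a / 2 * (norm wstar)\<^sup>2 + (\<Sum>m<T. VV m / cc (Suc m)))"
      using Tpos by (intro mult_left_mono) auto
    then show ?thesis unfolding Vsum using Tpos by (simp add: right_diff_distrib)
  qed
  have part1: "Min (EP ` {1..T}) - P wstar \<le> (1 / real T) * (\<Sum>t=1..T. EP t) - P wstar"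
  proof -
    have "(\<Sum>t=1..T. Min (EP ` {1..T})) \<le> (\<Sum>t=1..T. EP t)"
      by (rule sum_mono) simp
    then have "real T * Min (EP ` {1..T}) \<le> (\<Sum>t=1..T. EP t)" by simp
    then show ?thesis using Tpos by (simp add: field_simps)
  qed
  show ?thesis using part1 part2 unfolding Let_def P_def gP_def eta_def EP_def by simp
qed

end
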